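(* Let $n\ge0$ be an integer. In the polynomial ring $\mathbb C[\alpha_2,\alpha_3]$ with the monomial order described below, the leading term ideal of the ideal $I^0_n:=(\zeta_n,\zeta_{n+1},\overline\zeta_{n+1},\overline\zeta_{n+2})$ contains every monomial $\alpha_2^i\alpha_3^j$ with $2i+3j\ge 2n$.
   Context: The polynomials $\zeta_n,\overline\zeta_n\in\mathbb C[\alpha_2,\alpha_3]$ are defined by $\sum_{n\ge0}\zeta_nt^n=\exp(\alpha_2t+\alpha_3t^2/2)$ and $\sum_{n\ge0}\overline\zeta_nt^n=\exp(\alpha_2t-\alpha_3t^2/2)$; explicitly $\zeta_n=\sum_{0\le j\le n/2}\frac{\alpha_2^{n-2j}\alpha_3^j}{(n-2j)!\,j!\,2^j}$ and $\overline\zeta_n=\sum_{0\le j\le n/2}\frac{(-1)^j\alpha_2^{n-2j}\alpha_3^j}{(n-2j)!\,j!\,2^j}$. The monomial order is graded reverse lexicographic with $\deg\alpha_2=2$, $\deg\alpha_3=4$: $\alpha_2^i\alpha_3^j>\alpha_2^{i'}\alpha_3^{j'}$ if $2i+4j>2i'+4j'$, or if $2i+4j=2i'+4j'$ and the right-most nonzero entry of $(i-i',j-j')$ is negative. The leading term ideal of an ideal is the ideal generated by the leading monomials of its elements. *)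

theory Defs
  imports Complex_Main "HOL-Computational_Algebra.Polynomial"
begin

text \<open>C[alpha2, alpha3] is represented as complex poly poly: the outer variable is alpha3,
the inner one alpha2. The coefficient of alpha2^i alpha3^j in p is coeff (coeff p j) i.\<close>

type_synonym cpoly2 = "complex poly poly"

definition mon :: "nat \<Rightarrow> nat \<Rightarrow> cpoly2" where
  "mon i j = monom (monom 1 i) j"

definition cf :: "cpoly2 \<Rightarrow> nat \<Rightarrow> nat \<Rightarrow> complex" where
  "cf p i j = coeff (coeff p j) i"

definition supp2 :: "cpoly2 \<Rightarrow> (nat \<times> nat) set" where
  "supp2 p = {(i, j). cf p i j \<noteq> 0}"

definition zeta :: "nat \<Rightarrow> cpoly2" where
  "zeta n = (\<Sum>j\<le>n div 2. monom (monom (1 / (fact (n - 2*j) * fact j * 2 ^ j)) (n - 2*j)) j)"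

definition zetabar :: "nat \<Rightarrow> cpoly2" where
  "zetabar n = (\<Sum>j\<le>n div 2. monom (monom ((-1) ^ j / (fact (n - 2*j) * fact j * 2 ^ j)) (n - 2*j)) j)"

text \<open>Graded reverse lexicographic order, deg alpha2 = 2, deg alpha3 = 4:
 (i,j) > (i',j') iff 2i+4j > 2i'+4j', or equal weight and the right-most nonzero
 entry of (i-i', j-j') is negative.\<close>
definition mono_gt :: "nat \<times> nat \<Rightarrow> nat \<times> nat \<Rightarrow> bool" where
  "mono_gt m m' = (case m of (i, j) \<Rightarrow> case m' of (i', j') \<Rightarrow>
      2*i + 4*j > 2*i' + 4*j' \<or>
      (2*i + 4*j = 2*i' + 4*j' \<and>
        (if int j - int j' \<noteq> 0 then int j - int j' < 0 else int i - int i' < 0)))"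

definition lead_mono :: "cpoly2 \<Rightarrow> nat \<times> nat" where
  "lead_mono p = (THE m. m \<in> supp2 p \<and> (\<forall>m'\<in>supp2 p. m' \<noteq> m \<longrightarrow> mono_gt m m'))"

definition ideal_gen :: "cpoly2 set \<Rightarrow> cpoly2 set" where
  "ideal_gen S = {(\<Sum>k<N. c k * g k) | (N::nat) (c::nat \<Rightarrow> cpoly2) (g::nat \<Rightarrow> cpoly2). \<forall>k<N. g k \<in> S}"

definition lead_term_ideal :: "cpoly2 set \<Rightarrow> cpoly2 set" where
  "lead_term_ideal I = ideal_gen {mon (fst (lead_mono f)) (snd (lead_mono f)) | f. f \<in> I \<and> f \<noteq> 0}"

definition I0 :: "nat \<Rightarrow> cpoly2 set" where
  "I0 n = ideal_gen {zeta n, zeta (n+1), zetabar (n+1), zetabar (n+2)}"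

end

theory Submission
  imports Defs
begin


lemma cf_eqI: "(\<And>i j. cf p i j = cf q i j) \<Longrightarrow> p = q"
  unfolding cf_def by (metis poly_eqI)

lemma cf_add[simp]: "cf (p + q) i j = cf p i j + cf q i j"
  by (simp add: cf_def)

lemma cf_diff[simp]: "cf (p - q) i j = cf p i j - cf q i j"
  by (simp add: cf_def)

lemma cf_zero[simp]: "cf 0 i j = 0"
  by (simp add: cf_def)

lemma cf_sum: "cf (\<Sum>x\<in>A. p x) i j = (\<Sum>x\<in>A. cf (p x) i j)"
  by (simp add: cf_def coeff_sum)

lemma cf_monom_mult:
  "cf (monom (monom c a) b * f) i j = (if a \<le> i \<and> b \<le> j then c * cf f (i-a) (j-b) else 0)"
  by (auto simp: cf_def coeff_monom_mult)

lemma cf_mon: "cf (mon a b) i j = (if a = i \<and> b = j then 1 else 0)"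
  by (simp add: cf_def mon_def)

lemma cf_zeta: "cf (zeta N) i j = (if i + 2*j = N then 1/(fact i * fact j * 2^j) else 0)"
proof -
  have "cf (zeta N) i j = (\<Sum>j'\<le>N div 2. if j' = j then (if N - 2*j' = i then 1 / (fact (N - 2*j') * fact j' * 2 ^ j') else 0) else 0)"
    unfolding cf_def zeta_def coeff_sum by (rule sum.cong) auto
  also have "\<dots> = (if j \<le> N div 2 then (if N - 2*j = i then 1 / (fact (N - 2*j) * fact j * 2 ^ j) else 0) else 0)"
    by (simp add: sum.delta')
  also have "\<dots> = (if i + 2*j = N then 1/(fact i * fact j * 2^j) else 0)"
    by auto
  finally show ?thesis .
qed

lemma cf_zetabar: "cf (zetabar N) i j = (if i + 2*j = N then (-1)^j/(fact i * fact j * 2^j) else 0)"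
proof -
  have "cf (zetabar N) i j = (\<Sum>j'\<le>N div 2. if j' = j then (if N - 2*j' = i then (-1)^j' / (fact (N - 2*j') * fact j' * 2 ^ j') else 0) else 0)"
    unfolding cf_def zetabar_def coeff_sum by (rule sum.cong) auto
  also have "\<dots> = (if j \<le> N div 2 then (if N - 2*j = i then (-1)^j / (fact (N - 2*j) * fact j * 2 ^ j) else 0) else 0)"
    by (simp add: sum.delta')
  also have "\<dots> = (if i + 2*j = N then (-1)^j/(fact i * fact j * 2^j) else 0)"
    by auto
  finally show ?thesis .
qed


lemma fact_id: "(i + 2*j) / (fact i * fact j * 2^j :: complex) =
   (if 1 \<le> i then 1/(fact (i-1) * fact j * 2^j) else 0) + (if 1 \<le> j then 1/(fact i * fact (j-1) * 2^(j-1)) else 0)"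
proof (cases i; cases j)
  fix i' j' assume [simp]: "i = Suc i'" "j = Suc j'"
  have a: "(x + 2*y)/(x*F * (y*G) * (2*K)) = 1/(F * (y*G) * (2*K)) + 1/(x*F*G*K)"
    if "x \<noteq> 0" "y \<noteq> 0" "F \<noteq> 0" "G \<noteq> 0" "K \<noteq> 0" for x y F G K :: complex
    using that by (simp add: field_simps)
  have "of_nat (Suc i') \<noteq> (0::complex)" "of_nat (Suc j') \<noteq> (0::complex)" by (simp_all del: of_nat_Suc)
  from a[OF this, of "fact i'" "fact j'" "2^j'"] show ?thesis
    by (simp only: \<open>i = _\<close> \<open>j = _\<close> fact_Suc of_nat_mult power_Suc of_nat_add diff_Suc_1) simp
next
  fix j' assume [simp]: "i = 0" "j = Suc j'"
  have a: "(2*y)/((y*G) * (2*K)) = 1/(G*K)"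
    if "y \<noteq> 0" "G \<noteq> 0" "K \<noteq> 0" for y G K :: complex
    using that by (simp add: field_simps)
  have "of_nat (Suc j') \<noteq> (0::complex)" by (simp_all del: of_nat_Suc)
  from a[OF this, of "fact j'" "2^j'"] show ?thesis
    by (simp only: \<open>i = _\<close> \<open>j = _\<close> fact_Suc of_nat_mult power_Suc of_nat_add diff_Suc_1) simp
next
  fix i' assume [simp]: "i = Suc i'" "j = 0"
  have a: "x/(x*F) = 1/F"
    if "x \<noteq> 0" "F \<noteq> 0" for x F :: complex
    using that by (simp add: field_simps)
  have "of_nat (Suc i') \<noteq> (0::complex)" by (simp_all del: of_nat_Suc)
  from a[OF this, of "fact i'"] show ?thesis
    by (simp only: \<open>i = _\<close> \<open>j = _\<close> fact_Suc of_nat_mult power_Suc of_nat_add diff_Suc_1) simp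
qed simp

lemma zeta_rec: "monom (monom (of_nat (N+2)) 0) 0 * zeta (N+2) = mon 1 0 * zeta (N+1) + mon 0 1 * zeta N"
proof (rule cf_eqI)
  fix i j
  show "cf (monom (monom (of_nat (N+2)) 0) 0 * zeta (N+2)) i j = cf (mon 1 0 * zeta (N+1) + mon 0 1 * zeta N) i j"
  proof (cases "i + 2*j = N+2")
    case True
    have "cf (monom (monom (of_nat (N+2)) 0) 0 * zeta (N+2)) i j = of_nat (i+2*j) / (fact i * fact j * 2^j)"
      using True by (simp add: cf_monom_mult cf_zeta)
    also have "\<dots> = (if 1 \<le> i then 1/(fact (i-1) * fact j * 2^j) else 0) + (if 1 \<le> j then 1/(fact i * fact (j-1) * 2^(j-1)) else 0)"
      using fact_id[of i j] by simp
    also have "\<dots> = cf (mon 1 0 * zeta (N+1) + mon 0 1 * zeta N) i j"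
      using True unfolding mon_def cf_add cf_monom_mult cf_zeta by auto
    finally show ?thesis .
  next
    case False
    then show ?thesis unfolding mon_def cf_add cf_monom_mult cf_zeta by auto
  qed
qed

lemma fact_id2: "(-1)^j * (i + 2*j) / (fact i * fact j * 2^j :: complex) =
   (if 1 \<le> i then (-1)^j/(fact (i-1) * fact j * 2^j) else 0) - (if 1 \<le> j then (-1)^(j-1)/(fact i * fact (j-1) * 2^(j-1)) else 0)"
proof (cases i; cases j)
  fix i' j' assume [simp]: "i = Suc i'" "j = Suc j'"
  have a: "s * (x + 2*y)/(x*F * (y*G) * (2*K)) = s/(F * (y*G) * (2*K)) - (- s)/(x*F*G*K)"
    if "x \<noteq> 0" "y \<noteq> 0" "F \<noteq> 0" "G \<noteq> 0" "K \<noteq> 0" for x y F G K s :: complex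
    using that by (simp add: field_simps)
  have "of_nat (Suc i') \<noteq> (0::complex)" "of_nat (Suc j') \<noteq> (0::complex)" by (simp_all del: of_nat_Suc)
  from a[OF this, of "fact i'" "fact j'" "2^j'" "(-1)^Suc j'"] show ?thesis
    by (simp only: \<open>i = _\<close> \<open>j = _\<close> fact_Suc of_nat_mult power_Suc of_nat_add diff_Suc_1) simp
next
  fix j' assume [simp]: "i = 0" "j = Suc j'"
  have a: "s*(2*y)/((y*G) * (2*K)) = - (-s)/(G*K)"
    if "y \<noteq> 0" "G \<noteq> 0" "K \<noteq> 0" for y G K s :: complex
    using that by (simp add: field_simps)
  have "of_nat (Suc j') \<noteq> (0::complex)" by (simp_all del: of_nat_Suc)
  from a[OF this, of "fact j'" "2^j'" "(-1)^Suc j'"] show ?thesis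
    by (simp only: \<open>i = _\<close> \<open>j = _\<close> fact_Suc of_nat_mult power_Suc of_nat_add diff_Suc_1) simp
next
  fix i' assume [simp]: "i = Suc i'" "j = 0"
  have a: "x/(x*F) = 1/F"
    if "x \<noteq> 0" "F \<noteq> 0" for x F :: complex
    using that by (simp add: field_simps)
  have "of_nat (Suc i') \<noteq> (0::complex)" by (simp_all del: of_nat_Suc)
  from a[OF this, of "fact i'"] show ?thesis
    by (simp only: \<open>i = _\<close> \<open>j = _\<close> fact_Suc of_nat_mult power_Suc of_nat_add diff_Suc_1) simp
qed simp

lemma zetabar_rec: "monom (monom (of_nat (N+2)) 0) 0 * zetabar (N+2) = mon 1 0 * zetabar (N+1) - mon 0 1 * zetabar N"
proof (rule cf_eqI)
  fix i j
  show "cf (monom (monom (of_nat (N+2)) 0) 0 * zetabar (N+2)) i j = cf (mon 1 0 * zetabar (N+1) - mon 0 1 * zetabar N) i j"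
  proof (cases "i + 2*j = N+2")
    case True
    have "cf (monom (monom (of_nat (N+2)) 0) 0 * zetabar (N+2)) i j = (-1)^j * of_nat (i+2*j) / (fact i * fact j * 2^j)"
      using True by (simp add: cf_monom_mult cf_zetabar)
    also have "\<dots> = (if 1 \<le> i then (-1)^j/(fact (i-1) * fact j * 2^j) else 0) - (if 1 \<le> j then (-1)^(j-1)/(fact i * fact (j-1) * 2^(j-1)) else 0)"
      using fact_id2[of j i] by simp
    also have "\<dots> = cf (mon 1 0 * zetabar (N+1) - mon 0 1 * zetabar N) i j"
      using True unfolding mon_def cf_diff cf_monom_mult cf_zetabar by auto
    finally show ?thesis .
  next
    case False
    then show ?thesis unfolding mon_def cf_diff cf_monom_mult cf_zetabar by auto
  qed
qed


lemma sum_split_add: "(\<Sum>k<a+(b::nat). f k) = (\<Sum>k<a. f k) + (\<Sum>k<b. f (a+k))"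
  by (induct b) (simp_all add: add_ac)

lemma ig_base: "x \<in> S \<Longrightarrow> x \<in> ideal_gen S"
  unfolding ideal_gen_def
  by (rule CollectI, rule exI[of _ 1], rule exI[of _ "\<lambda>_. 1"], rule exI[of _ "\<lambda>_. x"]) simp

lemma ig_zero: "0 \<in> ideal_gen S"
  unfolding ideal_gen_def
  by (rule CollectI, rule exI[of _ 0]) simp

lemma ig_add: assumes "x \<in> ideal_gen S" "y \<in> ideal_gen S" shows "x + y \<in> ideal_gen S"
proof -
  obtain N1 :: nat and c1 g1 where 1: "x = (\<Sum>k<N1. c1 k * g1 k)" "\<forall>k<N1. g1 k \<in> S"
    using assms(1) unfolding ideal_gen_def mem_Collect_eq by blast
  obtain N2 :: nat and c2 g2 where 2: "y = (\<Sum>k<N2. c2 k * g2 k)" "\<forall>k<N2. g2 k \<in> S"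
    using assms(2) unfolding ideal_gen_def mem_Collect_eq by blast
  define c where "c k = (if k < N1 then c1 k else c2 (k - N1))" for k
  define g where "g k = (if k < N1 then g1 k else g2 (k - N1))" for k
  have "x + y = (\<Sum>k<N1+N2. c k * g k)"
    unfolding sum_split_add 1 2 c_def g_def by simp
  moreover have "\<forall>k<N1+N2. g k \<in> S"
    using 1 2 unfolding g_def by auto
  ultimately show ?thesis unfolding ideal_gen_def by blast
qed

lemma ig_mult: assumes "x \<in> ideal_gen S" shows "r * x \<in> ideal_gen S"
proof -
  obtain N1 :: nat and c1 g1 where 1: "x = (\<Sum>k<N1. c1 k * g1 k)" "\<forall>k<N1. g1 k \<in> S"
    using assms(1) unfolding ideal_gen_def mem_Collect_eq by blast
  have "r * x = (\<Sum>k<N1. (r * c1 k) * g1 k)"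
    unfolding 1 by (simp add: sum_distrib_left mult.assoc)
  then show ?thesis using 1 unfolding ideal_gen_def mem_Collect_eq
    by (intro exI[of _ N1] exI[of _ "\<lambda>k. r * c1 k"] exI[of _ g1]) simp
qed

lemma ig_diff: assumes "x \<in> ideal_gen S" "y \<in> ideal_gen S" shows "x - y \<in> ideal_gen S"
proof -
  have "x + (-1) * y \<in> ideal_gen S" by (intro ig_add ig_mult assms)
  then show ?thesis by simp
qed

lemma ig_sum: assumes "\<And>i. i \<in> A \<Longrightarrow> f i \<in> ideal_gen S" shows "sum f A \<in> ideal_gen S"
  using assms
proof (induct A rule: infinite_finite_induct)
  case (infinite A) then show ?case by (simp add: ig_zero)
next
  case empty then show ?case by (simp add: ig_zero)
next
  case (insert x F) then show ?case by (simp add: ig_add)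
qed

lemma const_inv: "monom (monom (1 / of_nat (N+2)) 0) 0 * monom (monom (of_nat (N+2)) 0) 0 = (1::cpoly2)"
proof -
  have "monom (monom (1 / of_nat (N+2)) 0) 0 * monom (monom (of_nat (N+2)) 0) 0 = monom (monom (1 / of_nat (N+2) * of_nat (N+2)) 0) (0::nat)"
    by (simp add: mult_monom)
  also have "(1 / of_nat (N+2) * of_nat (N+2) :: complex) = 1"
  proof -
    have h: "of_nat N + 2 \<noteq> (0::complex)"
      by (metis of_nat_add of_nat_eq_0_iff of_nat_numeral add_eq_0_iff_both_eq_0 zero_neq_numeral)
    then show ?thesis by (simp add: field_simps)
  qed
  finally show ?thesis by (simp add: one_pCons monom_0)
qed

lemma zeta_in_aux: "zeta (n+N) \<in> I0 n \<and> zeta (n+N+1) \<in> I0 n"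
proof (induct N)
  case 0
  then show ?case unfolding I0_def by (auto intro: ig_base)
next
  case (Suc N)
  have "zeta (n+N+2) = monom (monom (1 / of_nat (n+N+2)) 0) 0 * (monom (monom (of_nat (n+N+2)) 0) 0 * zeta (n+N+2))"
    using const_inv[of "n+N"] by (simp add: mult.assoc[symmetric])
  also have "\<dots> = monom (monom (1 / of_nat (n+N+2)) 0) 0 * (mon 1 0 * zeta (n+N+1) + mon 0 1 * zeta (n+N))"
    using zeta_rec[of "n+N"] by simp
  finally have "zeta (n+N+2) \<in> I0 n"
    using Suc by (metis ig_add ig_mult I0_def)
  then show ?case using Suc by simp
qed

lemma zeta_in: "n \<le> N \<Longrightarrow> zeta N \<in> I0 n"
  using zeta_in_aux[of n "N-n"] by simp

lemma zetabar_in_aux: "zetabar (n+1+N) \<in> I0 n \<and> zetabar (n+1+N+1) \<in> I0 n"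
proof (induct N)
  case 0
  then show ?case unfolding I0_def by (auto intro: ig_base)
next
  case (Suc N)
  have "zetabar (n+1+N+2) = monom (monom (1 / of_nat (n+1+N+2)) 0) 0 * (monom (monom (of_nat (n+1+N+2)) 0) 0 * zetabar (n+1+N+2))"
    using const_inv[of "n+1+N"] by (simp add: mult.assoc[symmetric])
  also have "\<dots> = monom (monom (1 / of_nat (n+1+N+2)) 0) 0 * (mon 1 0 * zetabar (n+1+N+1) - mon 0 1 * zetabar (n+1+N))"
    using zetabar_rec[of "n+1+N"] by simp
  finally have "zetabar (n+1+N+2) \<in> I0 n"
    using Suc by (metis ig_diff ig_mult I0_def)
  then show ?case using Suc by simp
qed

lemma zetabar_in: "n + 1 \<le> N \<Longrightarrow> zetabar N \<in> I0 n"
  using zetabar_in_aux[of n "N-n-1"] by simp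


definition ff :: "nat \<Rightarrow> nat \<Rightarrow> complex" where
  "ff i L = (\<Prod>t<i. of_nat L - of_nat t)"

lemma ff_Suc: "ff (Suc i) L = ff i L * (of_nat L - of_nat i)"
  by (simp add: ff_def)

lemma ff_fact: "i \<le> L \<Longrightarrow> ff i L * fact (L - i) = fact L"
proof (induct i)
  case 0 then show ?case by (simp add: ff_def)
next
  case (Suc i)
  have "L - i = Suc (L - Suc i)" using Suc.prems by simp
  then have "fact (L - i) = (of_nat (L - i) :: complex) * fact (L - Suc i)"
    by (metis fact_Suc)
  moreover have "(of_nat (L - i) :: complex) = of_nat L - of_nat i" using Suc.prems by (simp add: of_nat_diff)
  ultimately show ?case using Suc by (simp add: ff_Suc mult.assoc)
qed

lemma ff_zero: "L < i \<Longrightarrow> ff i L = 0"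
  unfolding ff_def by (rule prod_zero) auto

lemma ffexp: "\<exists>C. (\<forall>L. (\<Prod>s<d. of_nat L - r s) = (\<Sum>i\<le>d. C i * ff i L)) \<and> C d = 1 \<and> (\<forall>i>d. C i = 0)"
proof (induct d)
  case 0
  show ?case by (rule exI[of _ "\<lambda>i. if i = 0 then 1 else 0"]) (simp add: ff_def)
next
  case (Suc d)
  then obtain C where C: "\<forall>L. (\<Prod>s<d. of_nat L - r s) = (\<Sum>i\<le>d. C i * ff i L)" "C d = 1" "\<forall>i>d. C i = 0"
    by blast
  define C' where "C' i = (if i = 0 then 0 else C (i-1)) + (of_nat i - r d) * C i" for i
  have "(\<Prod>s<Suc d. of_nat L - r s) = (\<Sum>i\<le>Suc d. C' i * ff i L)" for L
  proof -
    have "(\<Sum>i\<le>Suc d. C' i * ff i L) = (\<Sum>i\<le>Suc d. (if i = 0 then 0 else C (i-1)) * ff i L) + (\<Sum>i\<le>Suc d. (of_nat i - r d) * C i * ff i L)"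
      by (simp only: C'_def distrib_right sum.distrib)
    also have "(\<Sum>i\<le>Suc d. (if i = 0 then 0 else C (i-1)) * ff i L) = (\<Sum>i\<le>d. C i * ff i L * (of_nat L - of_nat i))"
      by (subst sum.atMost_Suc_shift) (simp add: ff_Suc mult.assoc)
    also have "(\<Sum>i\<le>Suc d. (of_nat i - r d) * C i * ff i L) = (\<Sum>i\<le>d. (of_nat i - r d) * C i * ff i L)"
      using C(3) by simp
    also have "(\<Sum>i\<le>d. C i * ff i L * (of_nat L - of_nat i)) + (\<Sum>i\<le>d. (of_nat i - r d) * C i * ff i L)
        = (\<Sum>i\<le>d. C i * ff i L) * (of_nat L - r d)"
      unfolding sum_distrib_right sum.distrib[symmetric] by (rule sum.cong) (auto simp: algebra_simps)
    finally show ?thesis using C(1) by simp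
  qed
  moreover have "C' (Suc d) = 1" using C by (simp add: C'_def)
  moreover have "\<forall>i>Suc d. C' i = 0" using C by (simp add: C'_def)
  ultimately show ?case by blast
qed


lemma cf_monom0_mult:
  "cf (monom (monom c a) 0 * f) i j = (if a \<le> i then c * cf f (i-a) j else 0)"
  by (simp add: cf_monom_mult)

lemma lead_mono_eq:
  assumes "cf F p j \<noteq> 0" "\<And>x k. cf F x k \<noteq> 0 \<Longrightarrow> x + 2*k = p + 2*j \<and> j \<le> k"
  shows "lead_mono F = (p,j)"
  unfolding lead_mono_def
proof (rule the_equality)
  show "(p, j) \<in> supp2 F \<and> (\<forall>m'\<in>supp2 F. m' \<noteq> (p, j) \<longrightarrow> mono_gt (p, j) m')"
  proof
    show "(p, j) \<in> supp2 F" using assms(1) by (simp add: supp2_def)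
    show "\<forall>m'\<in>supp2 F. m' \<noteq> (p, j) \<longrightarrow> mono_gt (p, j) m'"
    proof (intro ballI impI)
      fix m' assume "m' \<in> supp2 F" "m' \<noteq> (p, j)"
      then obtain x k where m': "m' = (x,k)" "cf F x k \<noteq> 0" by (auto simp: supp2_def)
      with assms(2) have "x + 2*k = p + 2*j" "j \<le> k" by auto
      moreover have "k \<noteq> j" using m' \<open>m' \<noteq> (p, j)\<close> calculation by auto
      ultimately show "mono_gt (p, j) m'" unfolding m' mono_gt_def by auto
    qed
  qed
next
  fix m assume m: "m \<in> supp2 F \<and> (\<forall>m'\<in>supp2 F. m' \<noteq> m \<longrightarrow> mono_gt m m')"
  show "m = (p, j)"
  proof (rule ccontr)
    assume ne: "m \<noteq> (p, j)"
    obtain x k where mm: "m = (x,k)" "cf F x k \<noteq> 0" using m by (auto simp: supp2_def)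
    with assms(2) have "x + 2*k = p + 2*j" "j \<le> k" by auto
    moreover have "(p,j) \<in> supp2 F" using assms(1) by (simp add: supp2_def)
    ultimately have "mono_gt (x,k) (p,j)" using m mm ne by auto
    with \<open>x + 2*k = p + 2*j\<close> \<open>j \<le> k\<close> show False unfolding mono_gt_def by (auto split: if_splits)
  qed
qed

lemma inv_fact_ff: "i \<le> x \<Longrightarrow> 1 / (fact (x - i) :: complex) = ff i x / fact x"
proof -
  assume "i \<le> x"
  from ff_fact[OF this] have "ff i x * fact (x - i) = (fact x :: complex)" .
  moreover have "(fact (x-i) :: complex) \<noteq> 0" "(fact x :: complex) \<noteq> 0" by simp_all
  ultimately show ?thesis by (simp add: field_simps)
qed

lemma term_cf:
  assumes "i \<le> M" "E = cc + (-1)^k * dd"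
  shows "(if i \<le> x then cc * cf (zeta (M-i)) (x-i) k else 0) + (if i \<le> x then dd * cf (zetabar (M-i)) (x-i) k else 0)
     = (if x + 2*k = M then E * ff i x / (fact x * fact k * 2^k) else 0)"
proof (cases "i \<le> x")
  case True
  then have eq: "(x - i + 2*k = M - i) = (x + 2*k = M)" using assms(1) by auto
  show ?thesis
  proof (cases "x + 2*k = M")
    case True2: True
    have "cc * (1 / (fact (x - i) * fact k * 2 ^ k)) + dd * ((- 1) ^ k / (fact (x - i) * fact k * 2 ^ k))
       = E * (1 / fact (x-i)) / (fact k * 2^k)" using assms(2) by (simp add: field_simps)
    also have "\<dots> = E * ff i x / (fact x * fact k * 2^k)"
      unfolding inv_fact_ff[OF True] by (simp add: field_simps)
    finally show ?thesis using True True2 eq by (simp add: cf_zeta cf_zetabar)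
  next
    case False
    then show ?thesis using True eq by (simp add: cf_zeta cf_zetabar)
  qed
next
  case False
  then show ?thesis by (simp add: ff_zero)
qed


lemma ofnat_ofint_ne: "int x \<noteq> t \<Longrightarrow> (of_nat x :: complex) - of_int t \<noteq> 0"
proof
  assume "int x \<noteq> t" "(of_nat x :: complex) - of_int t = 0"
  then have "(of_int (int x) :: complex) = of_int t" by simp
  then have "int x = t" using of_int_eq_iff by blast
  with \<open>int x \<noteq> t\<close> show False by simp
qed

lemma ofnat_ofint_eq: "int x = t \<Longrightarrow> (of_nat x :: complex) - of_int t = 0"
  by auto

theorem main_aux:
  fixes n p j :: nat
  assumes h: "2*p + 3*j \<ge> 2*n"
  shows "mon p j \<in> lead_term_ideal (I0 n)"
proof -
  define M where "M = p + 2*j"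
  define m where "m = M - n"
  define d where "d = (j+1) div 2"
  have hnM: "n \<le> M" using h unfolding M_def by linarith
  have hd: "d \<le> m" using h unfolding d_def m_def M_def by presburger
  define rA :: "nat \<Rightarrow> complex" where "rA s = of_int (int M - 4 * int s)" for s
  define rB :: "nat \<Rightarrow> complex" where
    "rB s = (if 2*s+1 < j then of_int (int M - 2*(2*int s+1)) else of_int (int M + 1))" for s
  obtain CA where CA: "\<forall>L. (\<Prod>s<d. of_nat L - rA s) = (\<Sum>i\<le>d. CA i * ff i L)" "CA d = 1" "\<forall>i>d. CA i = 0"
    using ffexp by blast
  obtain CB where CB: "\<forall>L. (\<Prod>s<d. of_nat L - rB s) = (\<Sum>i\<le>d. CB i * ff i L)" "CB d = 1" "\<forall>i>d. CB i = 0"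
    using ffexp by blast
  define cc where "cc i = (CA i + CB i) / 2" for i
  define dd where "dd i = (CA i - CB i) / 2" for i
  define F where "F = (\<Sum>i\<le>m. monom (monom (cc i) i) 0 * zeta (M - i)) + (\<Sum>i\<le>m. monom (monom (dd i) i) 0 * zetabar (M - i))"
  have CAm: "CA m = CB m"
  proof (cases "d = m")
    case True then show ?thesis using CA CB by simp
  next
    case False then have "m > d" using hd by simp
    then show ?thesis using CA CB by simp
  qed
  have ddm: "dd m = 0" using CAm by (simp add: dd_def)
  have E: "cc i + (-1)^k * dd i = (if even k then CA i else CB i)" for i k
    by (cases "even k") (auto simp: cc_def dd_def field_simps)
  have t1: "monom (monom (cc i) i) 0 * zeta (M - i) \<in> I0 n" if "i \<in> {..m}" for i
  proof -
    have "n \<le> M - i" using that unfolding m_def using hnM by auto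
    then have "zeta (M - i) \<in> I0 n" by (rule zeta_in)
    then show ?thesis unfolding I0_def by (rule ig_mult)
  qed
  have t2: "monom (monom (dd i) i) 0 * zetabar (M - i) \<in> I0 n" if "i \<in> {..m}" for i
  proof (cases "i = m")
    case True then show ?thesis using ddm unfolding I0_def by (simp add: ig_zero)
  next
    case False
    then have "n + 1 \<le> M - i" using that unfolding m_def using hnM by auto
    then have "zetabar (M - i) \<in> I0 n" by (rule zetabar_in)
    then show ?thesis unfolding I0_def by (rule ig_mult)
  qed
  have FI: "F \<in> I0 n"
    using t1 t2 unfolding F_def I0_def by (intro ig_add ig_sum) auto
  define P :: "nat \<Rightarrow> nat \<Rightarrow> complex" where "P k x = (if even k then (\<Prod>s<d. of_nat x - rA s) else (\<Prod>s<d. of_nat x - rB s))" for k x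
  have cfF: "cf F x k = (if x + 2*k = M then P k x / (fact x * fact k * 2^k) else 0)" for x k
  proof -
    define EE where "EE i = (if even k then CA i else CB i)" for i
    have "cf F x k = (\<Sum>i\<le>m. (if i \<le> x then cc i * cf (zeta (M-i)) (x-i) k else 0) + (if i \<le> x then dd i * cf (zetabar (M-i)) (x-i) k else 0))"
      unfolding F_def cf_add cf_sum sum.distrib cf_monom0_mult by (rule refl)
    also have "\<dots> = (\<Sum>i\<le>m. (if x + 2*k = M then EE i * ff i x / (fact x * fact k * 2^k) else 0))"
    proof (rule sum.cong[OF refl])
      fix i assume "i \<in> {..m}"
      then have "i \<le> M" unfolding m_def by auto
      show "(if i \<le> x then cc i * cf (zeta (M-i)) (x-i) k else 0) + (if i \<le> x then dd i * cf (zetabar (M-i)) (x-i) k else 0) = (if x + 2*k = M then EE i * ff i x / (fact x * fact k * 2^k) else 0)"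
        by (rule term_cf[OF \<open>i \<le> M\<close>]) (simp add: E EE_def)
    qed
    also have "\<dots> = (if x + 2*k = M then (\<Sum>i\<le>m. EE i * ff i x) / (fact x * fact k * 2^k) else 0)"
      by (simp add: sum_divide_distrib)
    also have "(\<Sum>i\<le>m. EE i * ff i x) = (\<Sum>i\<le>d. EE i * ff i x)"
      by (rule sum.mono_neutral_right) (use hd CA CB in \<open>auto simp: EE_def\<close>)
    also have "\<dots> = P k x" unfolding P_def EE_def using CA CB by auto
    finally show ?thesis .
  qed
  have vanish: "P k (M - 2*k) = 0" if "k < j" for k
  proof (cases "even k")
    case True
    have "k div 2 < d" using that True unfolding d_def by presburger
    moreover have "of_nat (M - 2*k) - rA (k div 2) = 0"
      unfolding rA_def using that True unfolding M_def by (intro ofnat_ofint_eq) presburger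
    ultimately show ?thesis unfolding P_def using True by (auto intro: prod_zero)
  next
    case False
    have "k div 2 < d" using that False unfolding d_def by presburger
    moreover have "2 * (k div 2) + 1 < j" using that False by presburger
    moreover have "of_nat (M - 2*k) - rB (k div 2) = 0"
    proof -
      have "rB (k div 2) = of_int (int M - 2*(2*int(k div 2)+1))"
        using calculation(2) by (simp add: rB_def)
      moreover have "int (M - 2*k) = int M - 2*(2*int(k div 2)+1)"
        using that False unfolding M_def by presburger
      ultimately show ?thesis using ofnat_ofint_eq by metis
    qed
    ultimately show ?thesis unfolding P_def using False by (auto intro: prod_zero)
  qed
  have nonv: "P j p \<noteq> 0"
  proof (cases "even j")
    case True
    have "\<forall>s\<in>{..<d}. of_nat p - rA s \<noteq> 0"
    proof
      fix s assume "s \<in> {..<d}"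
      then have "int p \<noteq> int M - 4 * int s" using True unfolding d_def M_def by auto
      then show "of_nat p - rA s \<noteq> 0" unfolding rA_def by (rule ofnat_ofint_ne)
    qed
    then show ?thesis unfolding P_def using True by simp
  next
    case False
    have "\<forall>s\<in>{..<d}. of_nat p - rB s \<noteq> 0"
    proof
      fix s assume "s \<in> {..<d}"
      show "of_nat p - rB s \<noteq> 0"
      proof (cases "2*s+1 < j")
        case True
        then have "int p \<noteq> int M - 2*(2*int s+1)" using False unfolding M_def by presburger
        moreover have "rB s = of_int (int M - 2*(2*int s+1))" using True by (simp add: rB_def)
        ultimately show ?thesis using ofnat_ofint_ne by metis
      next
        case False
        have "int p \<noteq> int M + 1" unfolding M_def by simp
        moreover have "rB s = of_int (int M + 1)" using False by (simp add: rB_def)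
        ultimately show ?thesis using ofnat_ofint_ne by metis
      qed
    qed
    then show ?thesis unfolding P_def using False by simp
  qed
  have lead: "lead_mono F = (p, j)"
  proof (rule lead_mono_eq)
    show "cf F p j \<noteq> 0" unfolding cfF using nonv unfolding M_def by simp
    fix x k assume "cf F x k \<noteq> 0"
    then have xk: "x + 2*k = M" "P k x \<noteq> 0" unfolding cfF by (auto split: if_splits)
    have "j \<le> k"
    proof (rule ccontr)
      assume "\<not> j \<le> k"
      then have "P k (M - 2*k) = 0" by (intro vanish) simp
      moreover have "x = M - 2*k" using xk by simp
      ultimately show False using xk by simp
    qed
    then show "x + 2*k = p + 2*j \<and> j \<le> k" using xk unfolding M_def by simp
  qed
  have "F \<noteq> 0"
  proof
    assume "F = 0"
    then have "cf F p j = 0" by simp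
    moreover have "cf F p j \<noteq> 0" unfolding cfF using nonv unfolding M_def by simp
    ultimately show False by simp
  qed
  then have "mon p j \<in> {mon (fst (lead_mono f)) (snd (lead_mono f)) | f. f \<in> I0 n \<and> f \<noteq> 0}"
    using FI lead by force
  then show ?thesis unfolding lead_term_ideal_def by (rule ig_base)
qed

theorem proposition4p1:
  fixes n :: nat
  shows "\<forall>i j. 2*i + 3*j \<ge> 2*n \<longrightarrow> mon i j \<in> lead_term_ideal (I0 n)"
  using main_aux by blast

end
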